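(* Let $A(z,\lambda)\in\mathfrak{gl}_2(\mathbb{C}((z))[[\lambda]])$ and $R(z,\lambda)\in\mathrm{GL}_2(\mathbb{C}((z))[[\lambda]])$ satisfy: (1) $A$ is diagonal; (2) $R(z,0)\in\mathfrak{gl}_2(\mathbb{C}[[z]])$; (3) $\det R(z,0)\in\mathbb{C}[[z]]$ has a first-order zero at $z=0$; (4) $\tilde A:=R^{-1}AR+\lambda R^{-1}\frac{dR}{dz}\in\mathfrak{gl}_2(\mathbb{C}[[z,\lambda]])$. Then $\operatorname{res}_{z=0}\operatorname{tr}A(z,\lambda)=-\lambda$.
   Context: Residues of elements of $\mathbb{C}((z))[[\lambda]]$ are taken coefficientwise in $\lambda$. *)

theory Defs
  imports "HOL-Analysis.Analysis" "HOL-Computational_Algebra.Formal_Laurent_Series"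
begin

text \<open>Elements of C((z))[[lambda]] are modelled as complex fls fps:
  formal power series in lambda whose coefficients are formal Laurent series in z.\<close>

type_synonym LS = "complex fls fps"

definition dz :: "LS \<Rightarrow> LS" where
  "dz f = Abs_fps (\<lambda>k. fls_deriv (f $ k))"

definition dz_mat :: "LS^2^2 \<Rightarrow> LS^2^2" where
  "dz_mat M = (\<chi> i j. dz (M $ i $ j))"

definition res_z :: "LS \<Rightarrow> LS" where
  "res_z f = Abs_fps (\<lambda>k. fps_to_fls (fps_const (fls_residue (f $ k))))"

definition at_lambda0 :: "LS^2^2 \<Rightarrow> complex fls^2^2" where
  "at_lambda0 M = (\<chi> i j. (M $ i $ j) $ 0)"

definition is_pow_series :: "complex fls \<Rightarrow> bool" where
  "is_pow_series f \<longleftrightarrow> f \<in> range fps_to_fls"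

definition in_Czl :: "LS \<Rightarrow> bool" where
  "in_Czl f \<longleftrightarrow> (\<forall>k. is_pow_series (f $ k))"

end

theory Submission
  imports Defs
begin

lemma dz_nth[simp]: "dz f $ k = fls_deriv (f $ k)"
  by (simp add: dz_def)

lemma dz_add[simp]: "dz (f + g) = dz f + dz g"
  by (rule fps_ext) simp

lemma dz_diff[simp]: "dz (f - g) = dz f - dz g"
  by (rule fps_ext) simp

lemma dz_one[simp]: "dz 1 = 0"
  by (rule fps_ext) (simp add: fps_one_nth)

lemma dz_mult: "dz (f * g) = f * dz g + dz f * g"
  by (rule fps_ext) (simp add: fps_mult_nth fls_deriv_sum sum.distrib)

lemma dz_fps_deriv: "dz (fps_deriv f) = fps_deriv (dz f)"
  by (rule fps_ext) simp

lemma res_z_nth[simp]: "res_z f $ k = fls_const (fls_residue (f $ k))"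
  by (simp add: res_z_def)

lemma fls_const_add': "fls_const (a + b) = fls_const a + fls_const b"
  by (simp add: fls_eq_iff)

lemma res_z_add: "res_z (f + g) = res_z f + res_z g"
  by (rule fps_ext) (simp add: fls_residue_add fls_const_add')

lemma res_z_dz: "res_z (dz f) = 0"
  by (rule fps_ext) (simp only: res_z_nth dz_nth fls_residue_deriv, simp)

lemma res_z_Czl: "in_Czl f \<Longrightarrow> res_z f = 0"
proof (rule fps_ext)
  fix k assume "in_Czl f"
  then obtain g where "f $ k = fps_to_fls g"
    unfolding in_Czl_def is_pow_series_def by blast
  then show "res_z f $ k = 0 $ k"
    by (simp add: fls_residue_power_series)
qed

lemma in_Czl_add: "in_Czl f \<Longrightarrow> in_Czl g \<Longrightarrow> in_Czl (f + g)"
  unfolding in_Czl_def is_pow_series_def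
  by (metis fps_add_nth fps_to_fls_plus rangeE rangeI)

lemma core:
  fixes D E :: LS
  assumes ED: "E * D = 1" and sd: "fls_subdegree (D $ 0) = 1"
  shows "res_z (E * dz D) = 1"
proof -
  define F where "F = E * dz D"
  have dE: "dz E = - (dz D * E * E)"
  proof -
    have "0 = dz (E * D)" using ED by simp
    also have "\<dots> = E * dz D + dz E * D" by (rule dz_mult)
    finally have "0 = E * (E * dz D + dz E * D)" by simp
    also have "\<dots> = E * E * dz D + dz E * (E * D)" by (simp add: algebra_simps)
    finally have "E * E * dz D + dz E = 0" using ED by simp
    thus ?thesis by (simp add: ac_simps eq_neg_iff_add_eq_0)
  qed
  have lE: "fps_deriv E = - (fps_deriv D * E * E)"
  proof -
    have "0 = fps_deriv (E * D)" using ED by simp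
    also have "\<dots> = E * fps_deriv D + fps_deriv E * D" by simp
    finally have "0 = E * (E * fps_deriv D + fps_deriv E * D)" by simp
    also have "\<dots> = E * E * fps_deriv D + fps_deriv E * (E * D)" by (simp add: algebra_simps)
    finally have "E * E * fps_deriv D + fps_deriv E = 0" using ED by simp
    thus ?thesis by (simp add: ac_simps eq_neg_iff_add_eq_0)
  qed
  have LF: "fps_deriv F = dz (E * fps_deriv D)"
    unfolding F_def dz_mult fps_deriv_mult dz_fps_deriv dE lE
    by (simp add: algebra_simps)
  have hi: "fls_residue (F $ Suc k) = 0" for k
  proof -
    have "res_z (fps_deriv F) $ k = 0" by (simp only: LF res_z_dz) simp
    hence "fls_residue (of_int (int (Suc k)) * F $ Suc k) = 0"
      by simp
    hence "of_int (int (Suc k)) * fls_residue (F $ Suc k) = 0"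
      by (simp only: fls_residue_of_int_times)
    moreover have "(1 + of_nat k :: complex) \<noteq> 0" by (metis of_nat_Suc of_nat_neq_0)
    ultimately show ?thesis by simp
  qed
  have E0: "E $ 0 = inverse (D $ 0)"
  proof -
    have "E $ 0 * D $ 0 = 1" using ED by (metis fps_mult_nth_0 fps_one_nth)
    thus ?thesis by (metis inverse_unique mult.commute)
  qed
  have lo: "fls_residue (F $ 0) = 1"
    unfolding F_def using fls_residue_deriv_times_inverse_eq_subdegree(2)[of "D $ 0"] sd E0
    by simp
  show ?thesis
  proof (rule fps_ext)
    fix k show "res_z (E * dz D) $ k = 1 $ k"
      using hi lo unfolding F_def[symmetric] by (cases k) auto
  qed
qed


lemma res_z_X: "res_z (fps_X * f) = fps_X * res_z f"
  by (rule fps_ext) (simp add: fps_X_mult_nth)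

lemma trace2: "trace (M :: 'a::semiring_1^2^2) = M$1$1 + M$2$2"
  by (simp add: trace_def sum_2)

lemma mm2: "((M :: 'a::semiring_1^2^2) ** N) $ i $ j = M$i$1 * N$1$j + M$i$2 * N$2$j"
  by (simp add: matrix_matrix_mult_def sum_2)

theorem lemma4p12:
  fixes A R Rinv :: "LS^2^2"
  assumes R_inv: "Rinv ** R = mat 1" "R ** Rinv = mat 1"
    and A_diag: "\<forall>i j. i \<noteq> j \<longrightarrow> A $ i $ j = 0"
    and R0_pow: "\<forall>i j. is_pow_series (at_lambda0 R $ i $ j)"
    and R0_det: "det (at_lambda0 R) \<noteq> 0" "fls_subdegree (det (at_lambda0 R)) = 1"
    and At_reg: "\<forall>i j. in_Czl ((Rinv ** A ** R + mat fps_X ** Rinv ** dz_mat R) $ i $ j)"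
  shows "res_z (trace A) = - fps_X"
proof -
  define D where "D = det R"
  define E where "E = det Rinv"
  have ED: "E * D = 1"
    unfolding E_def D_def using R_inv(1) by (metis det_mul det_I)
  have D0: "D $ 0 = det (at_lambda0 R)"
    by (simp add: D_def det_2 at_lambda0_def)
  have Dexp: "D = R$1$1 * R$2$2 - R$1$2 * R$2$1" by (simp add: D_def det_2)
  have I: "(Rinv ** R) $ i $ j = (if i = j then 1 else 0)" for i j
    using R_inv(1) by (simp add: mat_def)
  have e11: "Rinv$1$1 * R$1$1 + Rinv$1$2 * R$2$1 = 1" using I[of 1 1] by (simp add: mm2)
  have e12: "Rinv$1$1 * R$1$2 + Rinv$1$2 * R$2$2 = 0" using I[of 1 2] by (simp add: mm2)
  have e21: "Rinv$2$1 * R$1$1 + Rinv$2$2 * R$2$1 = 0" using I[of 2 1] by (simp add: mm2)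
  have e22: "Rinv$2$1 * R$1$2 + Rinv$2$2 * R$2$2 = 1" using I[of 2 2] by (simp add: mm2)
  have p: "Rinv$1$1 = E * R$2$2" using e11 e12 ED unfolding Dexp by algebra
  have q: "Rinv$1$2 = - E * R$1$2" using e11 e12 ED unfolding Dexp by algebra
  have r: "Rinv$2$1 = - E * R$2$1" using e21 e22 ED unfolding Dexp by algebra
  have s: "Rinv$2$2 = E * R$1$1" using e21 e22 ED unfolding Dexp by algebra
  have t1: "trace (Rinv ** A ** R) = trace A"
    by (metis trace_mul_sym matrix_mul_assoc R_inv(2) matrix_mul_lid)
  have t2: "trace (mat fps_X ** Rinv ** dz_mat R) = fps_X * (E * dz D)"
    unfolding trace2 mm2 by (simp add: mat_def dz_mat_def Dexp dz_mult p q r s algebra_simps)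
  have "in_Czl (trace (Rinv ** A ** R + mat fps_X ** Rinv ** dz_mat R))"
    unfolding trace2 using At_reg in_Czl_add by blast
  hence "res_z (trace (Rinv ** A ** R + mat fps_X ** Rinv ** dz_mat R)) = 0"
    by (rule res_z_Czl)
  hence "res_z (trace A) + fps_X * res_z (E * dz D) = 0"
    by (simp only: trace_add t1 t2 res_z_add res_z_X)
  moreover have "res_z (E * dz D) = 1"
    using core[OF ED] D0 R0_det(2) by simp
  ultimately show ?thesis by (simp add: eq_neg_iff_add_eq_0)
qed

end
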